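(* Let $\kappa<\lambda$ be infinite cardinals with $\kappa$ regular. Let $\mathcal I$ be a normal $\kappa^+$-complete ideal on $\mathcal P_{\kappa^+}(\lambda)$, and assume that the quotient forcing $\mathcal P(\mathcal P_{\kappa^+}(\lambda))/\mathcal I$ has a $\kappa$-closed dense subset. Then $\mathrm{RC}(\kappa,\lambda)$ holds: every non-special tree of height $\kappa$ and size at most $\lambda$ has a non-special subtree of height $\kappa$ and size less than $\kappa^+$.
   Context: For a set $X$ and cardinal $\mu$, $\mathcal P_\mu(X)$ is the set of subsets of $X$ of size less than $\mu$. An ideal $\mathcal I$ on $\mathcal P_{\kappa^+}(\lambda)$ is $\kappa^+$-complete if it is closed under unions of at most $\kappa$ many members, and normal if it is fine (for each $\xi<\lambda$, $\{x:\xi\notin x\}\in\mathcal I$) and for every $\mathcal I$-positive set $A$ and every function $f$ on $A$ with $f(x)\in x$ for all $x\in A$, $f$ is constant on an $\mathcal I$-positive subset of $A$. The forcing $\mathcal P(\mathcal P_{\kappa^+}(\lambda))/\mathcal I$ consists of the $\mathcal I$-positive subsets of $\mathcal P_{\kappa^+}(\lambda)$ modulo $\mathcal I$, ordered by inclusion modulo $\mathcal I$. A forcing is $\kappa$-closed if every descending sequence of conditions of length less than $\kappa$ has a lower bound. A tree is a partial order $(T,<_T)$ in which the predecessors of each node are well-ordered. For a regular cardinal $\kappa$ and a tree $T$ of height $\kappa$, $T$ is special if there is $f:T\to T$ with $f(t)<_T t$ for all $t$ and such that for every $t\in T$, $f^{-1}[\{t\}]$ is a union of fewer than $\kappa$ antichains.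 For regular $\kappa$ and cardinal $\mu\ge\kappa^+$, $\mathrm{RC}(\kappa,\mu)$ states that every non-special tree of height $\kappa$ and size at most $\mu$ has a non-special subtree of height $\kappa$ and size less than $\kappa^+$. *)

theory Defs
  imports Main
begin

unbundle cardinal_syntax

definition pred_set :: "'b set \<Rightarrow> ('b \<Rightarrow> 'b \<Rightarrow> bool) \<Rightarrow> 'b \<Rightarrow> 'b set" where
  "pred_set T lt t = {s \<in> T. lt s t}"

text \<open>Reflexive order relation on the predecessors of t (as a set of pairs,
as required by the HOL well-order library).\<close>
definition pred_rel :: "'b set \<Rightarrow> ('b \<Rightarrow> 'b \<Rightarrow> bool) \<Rightarrow> 'b \<Rightarrow> 'b rel" where
  "pred_rel T lt t = {(s, s'). s \<in> pred_set T lt t \<and> s' \<in> pred_set T lt t \<and> (s = s' \<or> lt s s')}"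

definition is_tree :: "'b set \<Rightarrow> ('b \<Rightarrow> 'b \<Rightarrow> bool) \<Rightarrow> bool" where
  "is_tree T lt \<longleftrightarrow>
     (\<forall>t\<in>T. \<not> lt t t) \<and>
     (\<forall>s\<in>T. \<forall>t\<in>T. \<forall>u\<in>T. lt s t \<longrightarrow> lt t u \<longrightarrow> lt s u) \<and>
     (\<forall>t\<in>T. Well_order (pred_rel T lt t))"

text \<open>Height of a tree, compared with an (infinite) cardinal given as a
cardinal order r: every node has height (order type of its predecessors)
below r, and every ordinal below r (an initial segment of r) is attained or
exceeded by the height of some node.\<close>
definition tree_height_is :: "'b set \<Rightarrow> ('b \<Rightarrow> 'b \<Rightarrow> bool) \<Rightarrow> 'k rel \<Rightarrow> bool" where
  "tree_height_is T lt r \<longleftrightarrow>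
     (\<forall>t\<in>T. pred_rel T lt t <o r) \<and>
     (\<forall>a\<in>Field r. \<exists>t\<in>T. Restr r (underS r a) \<le>o pred_rel T lt t)"

definition is_antichain :: "'b set \<Rightarrow> ('b \<Rightarrow> 'b \<Rightarrow> bool) \<Rightarrow> 'b set \<Rightarrow> bool" where
  "is_antichain T lt A \<longleftrightarrow> A \<subseteq> T \<and> (\<forall>s\<in>A. \<forall>t\<in>A. \<not> lt s t)"

definition special_tree :: "'b set \<Rightarrow> ('b \<Rightarrow> 'b \<Rightarrow> bool) \<Rightarrow> 'k rel \<Rightarrow> bool" where
  "special_tree T lt r \<longleftrightarrow>
     (\<exists>f. (\<forall>t\<in>T. f t \<in> T) \<and>
          (\<forall>t\<in>T. (\<exists>s\<in>T. lt s t) \<longrightarrow> lt (f t) t) \<and>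
          (\<forall>t\<in>T. \<exists>\<A>. |\<A>| <o r \<and> (\<forall>A\<in>\<A>. is_antichain T lt A) \<and>
                       \<Union>\<A> = {s \<in> T. f s = t}))"

text \<open>RC(kappa, mu), with kappa given by the cardinal order r and mu by the
cardinality of the set M; trees live in the type 'b.\<close>
definition RC :: "'k rel \<Rightarrow> 'm set \<Rightarrow> 'b itself \<Rightarrow> bool" where
  "RC r M (_ :: 'b itself) \<longleftrightarrow>
     (\<forall>(T :: 'b set) lt. is_tree T lt \<and> tree_height_is T lt r \<and> |T| \<le>o |M| \<and>
        \<not> special_tree T lt r \<longrightarrow>
        (\<exists>S \<subseteq> T. tree_height_is S lt r \<and> |S| <o cardSuc r \<and> \<not> special_tree S lt r))"

definition Pkl :: "'k rel \<Rightarrow> 'l set \<Rightarrow> 'l set set" where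
  "Pkl r L = {x. x \<subseteq> L \<and> |x| <o cardSuc r}"

definition is_ideal :: "'a set \<Rightarrow> 'a set set \<Rightarrow> bool" where
  "is_ideal X I \<longleftrightarrow> I \<subseteq> Pow X \<and> {} \<in> I \<and> X \<notin> I \<and>
     (\<forall>A\<in>I. \<forall>B. B \<subseteq> A \<longrightarrow> B \<in> I) \<and> (\<forall>A\<in>I. \<forall>B\<in>I. A \<union> B \<in> I)"

definition kappa_plus_complete :: "'k rel \<Rightarrow> 'a set set \<Rightarrow> bool" where
  "kappa_plus_complete r I \<longleftrightarrow> (\<forall>F \<subseteq> I. |F| \<le>o r \<longrightarrow> \<Union>F \<in> I)"

definition normal_ideal :: "'l set \<Rightarrow> 'l set set \<Rightarrow> 'l set set set \<Rightarrow> bool" where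
  "normal_ideal L X I \<longleftrightarrow>
     (\<forall>\<xi>\<in>L. {x \<in> X. \<xi> \<notin> x} \<in> I) \<and>
     (\<forall>A. A \<subseteq> X \<and> A \<notin> I \<longrightarrow>
        (\<forall>f. (\<forall>x\<in>A. f x \<in> x) \<longrightarrow> (\<exists>B \<subseteq> A. B \<notin> I \<and> (\<exists>\<xi>. \<forall>x\<in>B. f x = \<xi>))))"

definition I_equiv :: "'a set \<Rightarrow> 'a set set \<Rightarrow> 'a set rel" where
  "I_equiv X I = {(A, B). A \<subseteq> X \<and> B \<subseteq> X \<and> (A - B) \<union> (B - A) \<in> I}"

definition quot_conds :: "'a set \<Rightarrow> 'a set set \<Rightarrow> 'a set set set" where
  "quot_conds X I = {A. A \<subseteq> X \<and> A \<notin> I} // I_equiv X I"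

definition quot_le :: "'a set set \<Rightarrow> 'a set set \<Rightarrow> 'a set set \<Rightarrow> bool" where
  "quot_le I p q \<longleftrightarrow> (\<exists>A\<in>p. \<exists>B\<in>q. A - B \<in> I)"

definition dense_in :: "'p set \<Rightarrow> ('p \<Rightarrow> 'p \<Rightarrow> bool) \<Rightarrow> 'p set \<Rightarrow> bool" where
  "dense_in P le D \<longleftrightarrow> D \<subseteq> P \<and> (\<forall>p\<in>P. \<exists>d\<in>D. le d p)"

definition kappa_closed :: "'k rel \<Rightarrow> 'p set \<Rightarrow> ('p \<Rightarrow> 'p \<Rightarrow> bool) \<Rightarrow> bool" where
  "kappa_closed r D le \<longleftrightarrow>
     (\<forall>a\<in>Field r. \<forall>s. (\<forall>\<alpha>\<in>underS r a. s \<alpha> \<in> D) \<and>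
        (\<forall>\<alpha>\<in>underS r a. \<forall>\<beta>\<in>underS r a. (\<alpha>, \<beta>) \<in> r \<longrightarrow> le (s \<beta>) (s \<alpha>)) \<longrightarrow>
        (\<exists>q\<in>D. \<forall>\<alpha>\<in>underS r a. le q (s \<alpha>)))"

end

theory Submission
  imports Defs
begin


definition forces :: "'a set set \<Rightarrow> 'a set set \<Rightarrow> 'a set \<Rightarrow> bool" where
  "forces I d B \<longleftrightarrow> (\<exists>A\<in>d. A - B \<in> I)"

lemma ideal_sub: "is_ideal X I \<Longrightarrow> A \<in> I \<Longrightarrow> B \<subseteq> A \<Longrightarrow> B \<in> I"
  unfolding is_ideal_def by blast

lemma ideal_un: "is_ideal X I \<Longrightarrow> A \<in> I \<Longrightarrow> B \<in> I \<Longrightarrow> A \<union> B \<in> I"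
  unfolding is_ideal_def by blast

lemma ideal_empty: "is_ideal X I \<Longrightarrow> {} \<in> I"
  unfolding is_ideal_def by blast

lemma qc_E:
  assumes "p \<in> quot_conds X I"
  obtains B where "B \<subseteq> X" "B \<notin> I" "p = I_equiv X I `` {B}"
  using assms unfolding quot_conds_def by (auto elim!: quotientE)

lemma cls_I: "B \<subseteq> X \<Longrightarrow> B \<notin> I \<Longrightarrow> I_equiv X I `` {B} \<in> quot_conds X I"
  unfolding quot_conds_def by (auto intro!: quotientI)

lemma cls_self: "is_ideal X I \<Longrightarrow> B \<subseteq> X \<Longrightarrow> B \<in> I_equiv X I `` {B}"
  unfolding I_equiv_def by (auto simp: ideal_empty)

lemma cls_mem:
  assumes "is_ideal X I" "p \<in> quot_conds X I" "A \<in> p"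
  shows "A \<subseteq> X" "A \<notin> I"
proof -
  obtain B where B: "B \<subseteq> X" "B \<notin> I" "p = I_equiv X I `` {B}" using qc_E assms(2) by blast
  then have A: "A \<subseteq> X" "(B - A) \<union> (A - B) \<in> I" using assms(3) unfolding I_equiv_def by auto
  then show "A \<subseteq> X" by simp
  show "A \<notin> I"
  proof
    assume "A \<in> I"
    have "B - A \<in> I" using A(2) ideal_sub[OF assms(1)] by blast
    then have "(B - A) \<union> A \<in> I" using ideal_un[OF assms(1)] \<open>A \<in> I\<close> by blast
    then have "B \<in> I" by (rule ideal_sub[OF assms(1)]) blast
    then show False using B by simp
  qed
qed

lemma cls_ne: "is_ideal X I \<Longrightarrow> p \<in> quot_conds X I \<Longrightarrow> \<exists>A. A \<in> p"
  by (metis cls_self qc_E)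

lemma cls_diff:
  assumes "is_ideal X I" "p \<in> quot_conds X I" "A \<in> p" "A' \<in> p"
  shows "A - A' \<in> I"
proof -
  obtain B where B: "B \<subseteq> X" "B \<notin> I" "p = I_equiv X I `` {B}" using qc_E assms(2) by blast
  then have "(B - A) \<union> (A - B) \<in> I" "(B - A') \<union> (A' - B) \<in> I" using assms(3,4) unfolding I_equiv_def by auto
  then have "A - B \<in> I" "B - A' \<in> I" by (blast intro: ideal_sub[OF assms(1)])+
  then have "(A - B) \<union> (B - A') \<in> I" using ideal_un[OF assms(1)] by blast
  then show ?thesis by (rule ideal_sub[OF assms(1)]) blast
qed

lemma le_refl: assumes "is_ideal X I" "p \<in> quot_conds X I" shows "quot_le I p p"
proof -
  obtain A where "A \<in> p" using cls_ne[OF assms] by blast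
  then show ?thesis unfolding quot_le_def using ideal_empty[OF assms(1)] by (intro bexI[of _ A]) auto
qed

lemma le_trans:
  assumes "is_ideal X I" "q \<in> quot_conds X I" "quot_le I p q" "quot_le I q s"
  shows "quot_le I p s"
proof -
  obtain A B where AB: "A \<in> p" "B \<in> q" "A - B \<in> I" using assms(3) unfolding quot_le_def by blast
  obtain B' C where BC: "B' \<in> q" "C \<in> s" "B' - C \<in> I" using assms(4) unfolding quot_le_def by blast
  have "B - B' \<in> I" using cls_diff[OF assms(1,2) AB(2) BC(1)] .
  then have "(A - B) \<union> (B - B') \<union> (B' - C) \<in> I" using AB BC ideal_un[OF assms(1)] by blast
  then have "A - C \<in> I" by (rule ideal_sub[OF assms(1)]) blast
  then show ?thesis unfolding quot_le_def using AB BC by blast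
qed

lemma forces_le:
  assumes "is_ideal X I" "q \<in> quot_conds X I" "quot_le I p q" "forces I q B"
  shows "forces I p B"
proof -
  obtain A B1 where AB: "A \<in> p" "B1 \<in> q" "A - B1 \<in> I" using assms(3) unfolding quot_le_def by blast
  obtain B' where BC: "B' \<in> q" "B' - B \<in> I" using assms(4) unfolding forces_def by blast
  have "B1 - B' \<in> I" using cls_diff[OF assms(1,2) AB(2) BC(1)] .
  then have "(A - B1) \<union> (B1 - B') \<union> (B' - B) \<in> I" using AB BC ideal_un[OF assms(1)] by blast
  then have "A - B \<in> I" by (rule ideal_sub[OF assms(1)]) blast
  then show ?thesis unfolding forces_def using AB by blast
qed

lemma forces_cls:
  assumes "is_ideal X I" "B \<subseteq> X" "B \<notin> I" "quot_le I p (I_equiv X I `` {B})"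
  shows "forces I p B"
proof (rule forces_le[OF assms(1) cls_I[OF assms(2,3)] assms(4)])
  show "forces I (I_equiv X I `` {B}) B" unfolding forces_def
    using cls_self[OF assms(1,2)] ideal_empty[OF assms(1)] by (intro bexI[of _ B]) auto
qed

lemma forces_meet:
  assumes "is_ideal X I" "p \<in> quot_conds X I" "forces I p B1" "forces I p B2"
  shows "\<exists>x. x \<in> B1 \<and> x \<in> B2"
proof (rule ccontr)
  assume n: "\<not> ?thesis"
  obtain A1 where A1: "A1 \<in> p" "A1 - B1 \<in> I" using assms(3) unfolding forces_def by blast
  obtain A2 where A2: "A2 \<in> p" "A2 - B2 \<in> I" using assms(4) unfolding forces_def by blast
  have "A1 - A2 \<in> I" using cls_diff[OF assms(1,2) A1(1) A2(1)] .
  then have "(A1 - B1) \<union> (A1 - A2) \<union> (A2 - B2) \<in> I" using A1 A2 ideal_un[OF assms(1)] by blast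
  then have "A1 \<in> I" by (rule ideal_sub[OF assms(1)]) (use n in blast)
  then show False using cls_mem[OF assms(1,2) A1(1)] by blast
qed





lemma Field_pred_rel: "Field (pred_rel T lt t) = pred_set T lt t"
  unfolding pred_rel_def Field_def by auto

lemma pred_rel_sub: "S \<subseteq> T \<Longrightarrow> pred_rel S lt t = Restr (pred_rel T lt t) (pred_set S lt t)"
  unfolding pred_rel_def pred_set_def by auto

lemma tree_wf:
  assumes "is_tree T lt"
  shows "wf {(s,t). s \<in> T \<and> t \<in> T \<and> lt s t}" (is "wf ?R")
proof (rule wfI_min)
  fix x Q assume xQ: "x \<in> (Q :: 'a set)"
  show "\<exists>z\<in>Q. \<forall>y. (y, z) \<in> ?R \<longrightarrow> y \<notin> Q"
  proof (cases "\<exists>y\<in>Q. (y, x) \<in> ?R")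
    case False then show ?thesis using xQ by blast
  next
    case True
    then obtain y where y: "y \<in> Q" "y \<in> T" "x \<in> T" "lt y x" by blast
    have WO: "Well_order (pred_rel T lt x)" using assms y(3) unfolding is_tree_def by blast
    then have wf: "wf (pred_rel T lt x - Id)" unfolding well_order_on_def by blast
    have yP: "y \<in> Q \<inter> pred_set T lt x" using y unfolding pred_set_def by auto
    obtain z where z: "z \<in> Q \<inter> pred_set T lt x" and zmin: "\<And>y. (y, z) \<in> pred_rel T lt x - Id \<Longrightarrow> y \<notin> Q \<inter> pred_set T lt x"
      using wfE_min[OF wf yP] by blast
    show ?thesis
    proof (intro bexI[of _ z] allI impI)
      fix y' assume "(y', z) \<in> ?R"
      then have y': "y' \<in> T" "z \<in> T" "lt y' z" by auto
      show "y' \<notin> Q"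
      proof
        assume "y' \<in> Q"
        have zx: "lt z x" using z unfolding pred_set_def by auto
        have "lt y' x" using assms y' zx y(3) unfolding is_tree_def by blast
        then have "y' \<in> Q \<inter> pred_set T lt x" using \<open>y' \<in> Q\<close> y' unfolding pred_set_def by auto
        moreover have "y' \<noteq> z" using assms y' unfolding is_tree_def by blast
        moreover have "(y', z) \<in> pred_rel T lt x" using \<open>lt y' x\<close> zx y' unfolding pred_rel_def pred_set_def by auto
        ultimately show False using zmin by blast
      qed
    qed (use z in blast)
  qed
qed

lemma Field_ordLess_imp:
  assumes "Card_order r" "Well_order w" "|Field w| <o r"
  shows "w <o r"
proof -
  have WR: "Well_order r" using assms(1) by (rule card_order_on_well_order_on)
  have "\<not> r \<le>o w"
  proof
    assume "r \<le>o w"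
    then have "|Field r| \<le>o |Field w|" by (rule card_of_mono2)
    moreover have "r =o |Field r|" using card_of_Field_ordIso[OF assms(1)] ordIso_symmetric by blast
    ultimately have "r \<le>o |Field w|" using ordIso_ordLeq_trans by blast
    then show False using assms(3) not_ordLess_ordLeq by blast
  qed
  then show ?thesis using ordLess_or_ordLeq[OF assms(2) WR] by blast
qed

lemma ordLess_imp_Field:
  assumes "Well_order w" "w <o r"
  shows "|Field w| <o r"
proof -
  have "|Field w| \<le>o w" using card_of_least assms(1) by blast
  then show ?thesis using assms(2) ordLeq_ordLess_trans by blast
qed

lemma closure_chain:
  assumes kc: "kappa_closed r D le" and cr: "Card_order r"
    and WO: "Well_order (pred_rel T lt t)" and lo: "pred_rel T lt t <o r"
    and inD: "\<forall>s\<in>pred_set T lt t. P s \<in> D"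
    and rf: "\<forall>s\<in>pred_set T lt t. le (P s) (P s)"
    and dc: "\<forall>s\<in>pred_set T lt t. \<forall>s'\<in>pred_set T lt t. lt s s' \<longrightarrow> le (P s') (P s)"
  shows "\<exists>q\<in>D. \<forall>s\<in>pred_set T lt t. le q (P s)"
proof -
  have WR: "Well_order r" using cr by (rule card_order_on_well_order_on)
  obtain a where a: "a \<in> Field r" "pred_rel T lt t =o Restr r (underS r a)"
    using ordLess_iff_ordIso_Restr[OF WR WO] lo by blast
  then have "Restr r (underS r a) =o pred_rel T lt t" using ordIso_symmetric by blast
  then obtain f where iso: "iso (Restr r (underS r a)) (pred_rel T lt t) f" unfolding ordIso_def by blast
  have FR: "Field (Restr r (underS r a)) = underS r a"
    using Field_Restr_ofilter[OF WR] wo_rel.underS_ofilter[of r a] WR unfolding wo_rel_def by blast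
  have bij: "bij_betw f (underS r a) (pred_set T lt t)"
    and pres: "\<forall>x\<in>underS r a. \<forall>y\<in>underS r a. ((x, y) \<in> Restr r (underS r a)) = ((f x, f y) \<in> pred_rel T lt t)"
    using iso unfolding iso_iff2 FR Field_pred_rel by blast+
  have fin: "\<And>x. x \<in> underS r a \<Longrightarrow> f x \<in> pred_set T lt t" using bij bij_betwE by blast
  have "\<forall>\<alpha>\<in>underS r a. P (f \<alpha>) \<in> D" using fin inD by blast
  moreover have "\<forall>\<alpha>\<in>underS r a. \<forall>\<beta>\<in>underS r a. (\<alpha>, \<beta>) \<in> r \<longrightarrow> le (P (f \<beta>)) (P (f \<alpha>))"
  proof (intro ballI impI)
    fix \<alpha> \<beta> assume ab: "\<alpha> \<in> underS r a" "\<beta> \<in> underS r a" "(\<alpha>, \<beta>) \<in> r"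
    then have "(f \<alpha>, f \<beta>) \<in> pred_rel T lt t" using pres by blast
    then have "f \<alpha> = f \<beta> \<or> lt (f \<alpha>) (f \<beta>)" unfolding pred_rel_def by auto
    then show "le (P (f \<beta>)) (P (f \<alpha>))" using rf dc fin ab by metis
  qed
  ultimately obtain q where q: "q \<in> D" "\<forall>\<alpha>\<in>underS r a. le q (P (f \<alpha>))"
    using kc[unfolded kappa_closed_def, THEN bspec, OF a(1), THEN spec[of _ "\<lambda>\<alpha>. P (f \<alpha>)"]] by blast
  have "\<forall>s\<in>pred_set T lt t. le q (P s)"
  proof
    fix s assume "s \<in> pred_set T lt t"
    then obtain \<alpha> where "\<alpha> \<in> underS r a" "s = f \<alpha>" using bij unfolding bij_betw_def by blast
    then show "le q (P s)" using q by blast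
  qed
  then show ?thesis using q by blast
qed





lemma norm_const:
  assumes "normal_ideal L X I" "{} \<in> I" "A \<subseteq> X" "A \<notin> I"
    and "\<forall>x\<in>A. k x \<in> Y \<and> h (k x) \<in> x" and "inj_on h Y"
  shows "\<exists>B\<subseteq>A. B \<notin> I \<and> (\<exists>c. \<forall>x\<in>B. k x = c)"
proof -
  have "\<forall>x\<in>A. (\<lambda>x. h (k x)) x \<in> x" using assms(5) by blast
  then obtain B \<xi> where B: "B \<subseteq> A" "B \<notin> I" "\<forall>x\<in>B. h (k x) = \<xi>"
    using assms(1)[unfolded normal_ideal_def, THEN conjunct2, rule_format, of A "\<lambda>x. h (k x)"] assms(3,4) by blast
  then have "B \<noteq> {}" using assms(2) by auto
  then obtain x0 where "x0 \<in> B" by blast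
  have "\<forall>x\<in>B. k x = k x0"
  proof
    fix x assume x: "x \<in> B"
    have "h (k x) = h (k x0)" using B(3) x \<open>x0 \<in> B\<close> by simp
    moreover have "k x \<in> Y" "k x0 \<in> Y" using assms(5) B(1) x \<open>x0 \<in> B\<close> by blast+
    ultimately show "k x = k x0" using assms(6) inj_onD by metis
  qed
  then show ?thesis using B by blast
qed

context
  fixes r :: "'k rel" and L :: "'l set" and I :: "'l set set set" and T :: "'b set" and lt
    and D and g :: "'b \<Rightarrow> 'l" and e :: "'k \<Rightarrow> 'l"
  assumes cr: "Card_order r" and ci: "cinfinite r" and reg: "regularCard r"
    and idl: "is_ideal (Pkl r L) I" and kpc: "kappa_plus_complete r I"
    and nml: "normal_ideal L (Pkl r L) I"
    and dns: "dense_in (quot_conds (Pkl r L) I) (quot_le I) D" and kcl: "kappa_closed r D (quot_le I)"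
    and tr: "is_tree T lt" and ht: "tree_height_is T lt r"
    and gi: "inj_on g T" and gL: "g ` T \<subseteq> L" and ei: "inj_on e (Field r)" and eL: "e ` Field r \<subseteq> L"
    and HH: "\<forall>S \<subseteq> T. tree_height_is S lt r \<and> |S| <o cardSuc r \<longrightarrow> special_tree S lt r"
begin

lemma WR: "Well_order r" using cr by (rule card_order_on_well_order_on)
lemma CI: "Cinfinite r" using cr ci by blast

definition wit where "wit a = (SOME t. t \<in> T \<and> Restr r (underS r a) \<le>o pred_rel T lt t)"
definition WW where "WW = (\<Union>a\<in>Field r. insert (wit a) (pred_set T lt (wit a)))"
definition ZZ where "ZZ = g ` WW \<union> e ` Field r"
definition C0 where "C0 = {x \<in> Pkl r L. ZZ \<subseteq> x}"
definition Sx where "Sx x = {t \<in> T. g t \<in> x}"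

lemma wit: assumes "a \<in> Field r" shows "wit a \<in> T \<and> Restr r (underS r a) \<le>o pred_rel T lt (wit a)"
proof -
  have "\<exists>t. t \<in> T \<and> Restr r (underS r a) \<le>o pred_rel T lt t" using ht assms unfolding tree_height_is_def by blast
  then show ?thesis unfolding wit_def by (rule someI_ex)
qed

lemma pred_WO: "t \<in> T \<Longrightarrow> Well_order (pred_rel T lt t)"
  using tr unfolding is_tree_def by blast

lemma pred_card: "t \<in> T \<Longrightarrow> |pred_set T lt t| <o r"
  using ordLess_imp_Field[OF pred_WO] ht unfolding tree_height_is_def Field_pred_rel by blast

lemma WW_sub: "WW \<subseteq> T"
  unfolding WW_def pred_set_def using wit by auto

lemma singl_le: "|{b}| \<le>o r"
  using Card_order_singl_ordLeq[OF cr] ci unfolding cinfinite_def by fastforce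

lemma WW_card: "|WW| \<le>o r"
proof -
  have "|Field r| \<le>o r" using card_of_Field_ordIso[OF cr] ordIso_iff_ordLeq by blast
  moreover have "\<forall>a\<in>Field r. |insert (wit a) (pred_set T lt (wit a))| \<le>o r"
  proof
    fix a assume a: "a \<in> Field r"
    have "|pred_set T lt (wit a)| <o r" by (rule pred_card) (use wit[OF a] in blast)
    then have "|pred_set T lt (wit a)| \<le>o r" by (rule ordLess_imp_ordLeq)
    then have "|{wit a} \<union> pred_set T lt (wit a)| \<le>o r" by (rule Un_Cinfinite_bound[OF singl_le _ CI])
    then show "|insert (wit a) (pred_set T lt (wit a))| \<le>o r" by simp
  qed
  ultimately show ?thesis unfolding WW_def by (rule UNION_Cinfinite_bound[OF _ _ CI])
qed

lemma ZZ_L: "ZZ \<subseteq> L" unfolding ZZ_def using WW_sub gL eL by blast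

lemma ZZ_card: "|ZZ| \<le>o r"
proof -
  have "|g ` WW| \<le>o r" using card_of_image WW_card ordLeq_transitive by blast
  moreover have "|e ` Field r| \<le>o r"
    using card_of_image card_of_Field_ordIso[OF cr] ordIso_iff_ordLeq ordLeq_transitive by blast
  ultimately show ?thesis unfolding ZZ_def using Un_Cinfinite_bound[OF _ _ CI] by blast
qed

lemma C0_co: "Pkl r L - C0 \<in> I"
proof -
  let ?F = "(\<lambda>z. {x \<in> Pkl r L. z \<notin> x}) ` ZZ"
  have "?F \<subseteq> I" using nml ZZ_L unfolding normal_ideal_def by blast
  moreover have "|?F| \<le>o r" using card_of_image ZZ_card ordLeq_transitive by blast
  ultimately have "\<Union>?F \<in> I" using kpc unfolding kappa_plus_complete_def by blast
  moreover have "Pkl r L - C0 = \<Union>?F" unfolding C0_def by auto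
  ultimately show ?thesis by simp
qed

lemma Sx_special: assumes "x \<in> C0" shows "special_tree (Sx x) lt r"
proof -
  have xP: "x \<in> Pkl r L" "ZZ \<subseteq> x" using assms unfolding C0_def by auto
  have sub: "Sx x \<subseteq> T" unfolding Sx_def by auto
  have card: "|Sx x| <o cardSuc r"
  proof -
    have "|Sx x| \<le>o |x|" by (rule card_of_ordLeqI[of g]) (use gi sub in \<open>auto simp: Sx_def intro: inj_on_subset\<close>)
    moreover have "|x| <o cardSuc r" using xP unfolding Pkl_def by blast
    ultimately show ?thesis using ordLeq_ordLess_trans by blast
  qed
  have h1: "\<forall>t\<in>Sx x. pred_rel (Sx x) lt t <o r"
  proof
    fix t assume t: "t \<in> Sx x"
    then have tT: "t \<in> T" using sub by blast
    have eq: "pred_rel (Sx x) lt t = Restr (pred_rel T lt t) (pred_set (Sx x) lt t)" by (rule pred_rel_sub[OF sub])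
    have WO: "Well_order (pred_rel (Sx x) lt t)" unfolding eq using Well_order_Restr pred_WO[OF tT] by blast
    have "pred_set (Sx x) lt t \<subseteq> pred_set T lt t" using sub unfolding pred_set_def by auto
    then have "|Field (pred_rel (Sx x) lt t)| <o r"
      unfolding Field_pred_rel using card_of_mono1 pred_card[OF tT] ordLeq_ordLess_trans by blast
    then show "pred_rel (Sx x) lt t <o r" using Field_ordLess_imp[OF cr WO] by blast
  qed
  have h2: "\<forall>a\<in>Field r. \<exists>t\<in>Sx x. Restr r (underS r a) \<le>o pred_rel (Sx x) lt t"
  proof
    fix a assume a: "a \<in> Field r"
    have inW: "insert (wit a) (pred_set T lt (wit a)) \<subseteq> WW" unfolding WW_def using a by blast
    then have "g ` insert (wit a) (pred_set T lt (wit a)) \<subseteq> x" using xP unfolding ZZ_def by blast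
    then have ps: "pred_set (Sx x) lt (wit a) = pred_set T lt (wit a)" "wit a \<in> Sx x"
      using wit[OF a] unfolding pred_set_def Sx_def by auto
    then have "pred_rel (Sx x) lt (wit a) = pred_rel T lt (wit a)" unfolding pred_rel_def by simp
    then show "\<exists>t\<in>Sx x. Restr r (underS r a) \<le>o pred_rel (Sx x) lt t" using ps(2) wit[OF a] by metis
  qed
  show ?thesis using HH sub card h1 h2 unfolding tree_height_is_def by blast
qed


lemma bound_under: assumes "K \<subseteq> Field r" "|K| <o r" shows "\<exists>b\<in>Field r. K \<subseteq> under r b"
proof -
  have "\<not> cofinal K r"
  proof
    assume "cofinal K r"
    then have "|K| =o r" using reg assms(1) unfolding regularCard_def by blast
    then show False using assms(2) not_ordLess_ordIso by blast
  qed
  then obtain b where b: "b \<in> Field r" "\<forall>c\<in>K. b = c \<or> (b, c) \<notin> r" unfolding cofinal_def by blast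
  have wo: "wo_rel r" using WR unfolding wo_rel_def .
  have "K \<subseteq> under r b"
  proof
    fix c assume c: "c \<in> K"
    then have "c \<in> Field r" using assms(1) by blast
    then have "(b, c) \<in> r \<or> (c, b) \<in> r" using wo_rel.TOTALS[OF wo] b(1) by blast
    moreover have "(b, b) \<in> r" using wo_rel.REFL[OF wo] b(1) unfolding refl_on_def by blast
    ultimately have "(c, b) \<in> r" using b(2) c by (cases "b = c") auto
    then show "c \<in> under r b" unfolding under_def by blast
  qed
  then show ?thesis using b(1) by blast
qed

definition Fx where "Fx x = (SOME f. (\<forall>t\<in>Sx x. f t \<in> Sx x) \<and> (\<forall>t\<in>Sx x. (\<exists>s\<in>Sx x. lt s t) \<longrightarrow> lt (f t) t) \<and>
   (\<forall>t\<in>Sx x. \<exists>\<A>. |\<A>| <o r \<and> (\<forall>A\<in>\<A>. is_antichain (Sx x) lt A) \<and> \<Union>\<A> = {s \<in> Sx x. f s = t}))"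

lemma Fx: assumes "x \<in> C0"
  shows "(\<forall>t\<in>Sx x. Fx x t \<in> Sx x) \<and> (\<forall>t\<in>Sx x. (\<exists>s\<in>Sx x. lt s t) \<longrightarrow> lt (Fx x t) t) \<and>
   (\<forall>t\<in>Sx x. \<exists>\<A>. |\<A>| <o r \<and> (\<forall>A\<in>\<A>. is_antichain (Sx x) lt A) \<and> \<Union>\<A> = {s \<in> Sx x. Fx x s = t})"
  using Sx_special[OF assms] unfolding special_tree_def Fx_def by (rule someI_ex)

definition Af where "Af x u = (SOME \<A>. |\<A>| <o r \<and> (\<forall>A\<in>\<A>. is_antichain (Sx x) lt A) \<and> \<Union>\<A> = {s \<in> Sx x. Fx x s = u})"

lemma Af: assumes "x \<in> C0" "u \<in> Sx x"
  shows "|Af x u| <o r \<and> (\<forall>A\<in>Af x u. is_antichain (Sx x) lt A) \<and> \<Union>(Af x u) = {s \<in> Sx x. Fx x s = u}"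
proof -
  have "\<exists>\<A>. |\<A>| <o r \<and> (\<forall>A\<in>\<A>. is_antichain (Sx x) lt A) \<and> \<Union>\<A> = {s \<in> Sx x. Fx x s = u}"
    using Fx[OF assms(1)] assms(2) by blast
  then show ?thesis unfolding Af_def by (rule someI_ex)
qed

definition Hf where "Hf x u = (SOME h. inj_on h (Af x u) \<and> h ` Af x u \<subseteq> Field r)"

lemma Hf: assumes "x \<in> C0" "u \<in> Sx x"
  shows "inj_on (Hf x u) (Af x u) \<and> Hf x u ` Af x u \<subseteq> Field r"
proof -
  have "r \<le>o |Field r|" using card_of_Field_ordIso[OF cr] ordIso_iff_ordLeq by blast
  then have "|Af x u| \<le>o |Field r|" using Af[OF assms] ordLess_imp_ordLeq ordLeq_transitive by blast
  then have "\<exists>h. inj_on h (Af x u) \<and> h ` Af x u \<subseteq> Field r" using card_of_ordLeq by blast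
  then show ?thesis unfolding Hf_def by (rule someI_ex)
qed

definition bf where "bf x u = (SOME b. b \<in> Field r \<and> Hf x u ` Af x u \<subseteq> under r b)"

lemma bf: assumes "x \<in> C0" "u \<in> Sx x"
  shows "bf x u \<in> Field r \<and> Hf x u ` Af x u \<subseteq> under r (bf x u)"
proof -
  have "|Hf x u ` Af x u| <o r" using Af[OF assms] card_of_image ordLeq_ordLess_trans by blast
  moreover have "Hf x u ` Af x u \<subseteq> Field r" using Hf[OF assms] by blast
  ultimately have "\<exists>b. b \<in> Field r \<and> Hf x u ` Af x u \<subseteq> under r b" using bound_under by blast
  then show ?thesis unfolding bf_def by (rule someI_ex)
qed

definition idx where "idx x t = Hf x (Fx x t) (SOME A. A \<in> Af x (Fx x t) \<and> t \<in> A)"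

lemma idx_A: assumes "x \<in> C0" "t \<in> Sx x"
  shows "(SOME A. A \<in> Af x (Fx x t) \<and> t \<in> A) \<in> Af x (Fx x t) \<and> t \<in> (SOME A. A \<in> Af x (Fx x t) \<and> t \<in> A)"
proof -
  have u: "Fx x t \<in> Sx x" using Fx[OF assms(1)] assms(2) by blast
  have "t \<in> \<Union>(Af x (Fx x t))" using Af[OF assms(1) u] assms(2) by blast
  then have "\<exists>A. A \<in> Af x (Fx x t) \<and> t \<in> A" by blast
  then show ?thesis by (rule someI_ex)
qed

lemma idx: assumes "x \<in> C0" "t \<in> Sx x"
  shows "Fx x t \<in> Sx x \<and> idx x t \<in> under r (bf x (Fx x t)) \<and> idx x t \<in> Field r"
proof -
  have u: "Fx x t \<in> Sx x" using Fx[OF assms(1)] assms(2) by blast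
  show ?thesis using u idx_A[OF assms] bf[OF assms(1) u] Hf[OF assms(1) u] unfolding idx_def by blast
qed

lemma idx_anti: assumes "x \<in> C0" "s \<in> Sx x" "s' \<in> Sx x" "Fx x s = Fx x s'" "idx x s = idx x s'"
  shows "\<not> lt s s'"
proof -
  let ?u = "Fx x s"
  have u: "?u \<in> Sx x" using Fx[OF assms(1)] assms(2) by blast
  let ?A = "SOME A. A \<in> Af x (Fx x s) \<and> s \<in> A" and ?A' = "SOME A. A \<in> Af x (Fx x s') \<and> s' \<in> A"
  have A: "?A \<in> Af x ?u" "s \<in> ?A" using idx_A[OF assms(1,2)] by blast+
  have A': "?A' \<in> Af x ?u" "s' \<in> ?A'" using idx_A[OF assms(1,3)] assms(4) by auto
  have "Hf x ?u ?A = Hf x ?u ?A'" using assms(4,5) unfolding idx_def by simp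
  moreover have "inj_on (Hf x ?u) (Af x ?u)" using Hf[OF assms(1) u] by blast
  ultimately have "?A = ?A'" using A(1) A'(1) by (simp add: inj_on_eq_iff)
  then have "is_antichain (Sx x) lt ?A" "s \<in> ?A" "s' \<in> ?A" using Af[OF assms(1) u] A A' by auto
  then show ?thesis unfolding is_antichain_def by blast
qed


definition mp where "mp t = (if \<exists>s\<in>T. lt s t then SOME s. s \<in> T \<and> lt s t else t)"

lemma mp: assumes "t \<in> T" shows "mp t \<in> T \<and> ((\<exists>s\<in>T. lt s t) \<longrightarrow> lt (mp t) t)"
proof (cases "\<exists>s\<in>T. lt s t")
  case True
  then have "\<exists>s. s \<in> T \<and> lt s t" by blast
  then have "(SOME s. s \<in> T \<and> lt s t) \<in> T \<and> lt (SOME s. s \<in> T \<and> lt s t) t" by (rule someI_ex)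
  then show ?thesis using True unfolding mp_def by simp
next
  case False then show ?thesis using assms unfolding mp_def by simp
qed

definition Qp where "Qp t d B u b i \<longleftrightarrow> B \<subseteq> Pkl r L \<and> forces I d B \<and>
  (\<forall>x\<in>B. x \<in> C0 \<and> g t \<in> x \<and> g (mp t) \<in> x \<and> Fx x t = u \<and> bf x t = b \<and> idx x t = i)"

lemma DQ: "D \<subseteq> quot_conds (Pkl r L) I" using dns unfolding dense_in_def by blast

lemma decide:
  assumes t: "t \<in> T" and q: "q \<in> quot_conds (Pkl r L) I"
  shows "\<exists>d\<in>D. quot_le I d q \<and> (\<exists>B u b i. Qp t d B u b i)"
proof -
  let ?X = "Pkl r L"
  obtain A where A: "A \<in> q" using cls_ne[OF idl q] by blast
  have AX: "A \<subseteq> ?X" "A \<notin> I" using cls_mem[OF idl q A] by blast+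
  define A1 where "A1 = {x \<in> A. x \<in> C0 \<and> g t \<in> x \<and> g (mp t) \<in> x}"
  have gt: "g t \<in> L" "g (mp t) \<in> L" using gL t mp[OF t] by blast+
  have f1: "{x \<in> ?X. g t \<notin> x} \<in> I" "{x \<in> ?X. g (mp t) \<notin> x} \<in> I"
    using nml gt unfolding normal_ideal_def by blast+
  have "(?X - C0) \<union> {x \<in> ?X. g t \<notin> x} \<union> {x \<in> ?X. g (mp t) \<notin> x} \<in> I"
    using C0_co f1 ideal_un[OF idl] by blast
  then have AA1: "A - A1 \<in> I" by (rule ideal_sub[OF idl]) (use AX in \<open>auto simp: A1_def\<close>)
  have A1I: "A1 \<notin> I"
  proof
    assume "A1 \<in> I"
    then have "(A - A1) \<union> A1 \<in> I" using AA1 ideal_un[OF idl] by blast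
    then have "A \<in> I" by (rule ideal_sub[OF idl]) blast
    then show False using AX by blast
  qed
  have A1X: "A1 \<subseteq> ?X" using AX unfolding A1_def by blast
  have inS: "\<And>x. x \<in> A1 \<Longrightarrow> x \<in> C0 \<and> t \<in> Sx x" unfolding A1_def Sx_def using t by blast
  have ZZx: "\<And>x. x \<in> C0 \<Longrightarrow> e ` Field r \<subseteq> x" unfolding C0_def ZZ_def by blast
  have "\<forall>x\<in>A1. Fx x t \<in> T \<and> g (Fx x t) \<in> x"
  proof
    fix x assume x: "x \<in> A1"
    then have "Fx x t \<in> Sx x" using Fx inS by blast
    then show "Fx x t \<in> T \<and> g (Fx x t) \<in> x" unfolding Sx_def by blast
  qed
  then obtain B1 c1 where B1: "B1 \<subseteq> A1" "B1 \<notin> I" "\<forall>x\<in>B1. Fx x t = c1"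
    using norm_const[OF nml ideal_empty[OF idl] A1X A1I _ gi, of "\<lambda>x. Fx x t"] by blast
  have "\<forall>x\<in>B1. bf x t \<in> Field r \<and> e (bf x t) \<in> x"
  proof
    fix x assume x: "x \<in> B1"
    then have "x \<in> C0" "t \<in> Sx x" using inS B1(1) by blast+
    then show "bf x t \<in> Field r \<and> e (bf x t) \<in> x" using bf ZZx by blast
  qed
  then obtain B2 c2 where B2: "B2 \<subseteq> B1" "B2 \<notin> I" "\<forall>x\<in>B2. bf x t = c2"
    using norm_const[OF nml ideal_empty[OF idl] _ B1(2) _ ei, of "\<lambda>x. bf x t"] B1(1) A1X by blast
  have "\<forall>x\<in>B2. idx x t \<in> Field r \<and> e (idx x t) \<in> x"
  proof
    fix x assume x: "x \<in> B2"
    then have "x \<in> C0" "t \<in> Sx x" using inS B1(1) B2(1) by blast+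
    then show "idx x t \<in> Field r \<and> e (idx x t) \<in> x" using idx ZZx by blast
  qed
  then obtain B3 c3 where B3: "B3 \<subseteq> B2" "B3 \<notin> I" "\<forall>x\<in>B3. idx x t = c3"
    using norm_const[OF nml ideal_empty[OF idl] _ B2(2) _ ei, of "\<lambda>x. idx x t"] B2(1) B1(1) A1X by blast
  have B3X: "B3 \<subseteq> ?X" using B3(1) B2(1) B1(1) A1X by blast
  have cl3: "I_equiv ?X I `` {B3} \<in> quot_conds ?X I" using cls_I[OF B3X B3(2)] .
  obtain d where d: "d \<in> D" "quot_le I d (I_equiv ?X I `` {B3})" using dns cl3 unfolding dense_in_def by blast
  have fo: "forces I d B3" using forces_cls[OF idl B3X B3(2) d(2)] .
  have "B3 - A = {}" using B3(1) B2(1) B1(1) A1_def by auto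
  then have "B3 - A \<in> I" using ideal_empty[OF idl] by (simp only:)
  then have "quot_le I (I_equiv ?X I `` {B3}) q"
    unfolding quot_le_def using cls_self[OF idl B3X] A by blast
  then have le: "quot_le I d q" using le_trans[OF idl cl3 d(2)] by blast
  have "Qp t d B3 c1 c2 c3" unfolding Qp_def using B3X fo B3 B2 B1 A1_def by auto
  then show ?thesis using d(1) le by blast
qed

definition RR where "RR = {(s,t). s \<in> T \<and> t \<in> T \<and> lt s t}"
definition step where "step h t = (SOME d. d \<in> D \<and> (\<forall>s\<in>pred_set T lt t. quot_le I d (h s)) \<and> (\<exists>B u b i. Qp t d B u b i))"
definition pf where "pf = wfrec RR step"

lemma RRwf: "wf RR" unfolding RR_def by (rule tree_wf[OF tr])

lemma pf_eq: assumes "t \<in> T" shows "pf t = step pf t"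
proof -
  have "pf t = step (cut pf RR t) t" unfolding pf_def by (rule wfrec[OF RRwf])
  moreover have "\<forall>s\<in>pred_set T lt t. cut pf RR t s = pf s"
    using assms unfolding pred_set_def by (auto simp: RR_def cut_def)
  then have "step (cut pf RR t) t = step pf t" unfolding step_def by (intro arg_cong[where f=Eps] ext) auto
  ultimately show ?thesis by simp
qed

lemma pf_good: "t \<in> T \<Longrightarrow> pf t \<in> D \<and> (\<forall>s\<in>pred_set T lt t. quot_le I (pf t) (pf s)) \<and> (\<exists>B u b i. Qp t (pf t) B u b i)"
proof (induction t rule: wf_induct_rule[OF RRwf])
  case (1 t)
  have IH: "\<And>s. s \<in> pred_set T lt t \<Longrightarrow> pf s \<in> D \<and> (\<forall>s'\<in>pred_set T lt s. quot_le I (pf s) (pf s'))"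
    using 1 unfolding pred_set_def RR_def by blast
  have lo: "pred_rel T lt t <o r" using ht 1(2) unfolding tree_height_is_def by blast
  have inD: "\<forall>s\<in>pred_set T lt t. pf s \<in> D" using IH by blast
  have rf: "\<forall>s\<in>pred_set T lt t. quot_le I (pf s) (pf s)" using inD DQ le_refl[OF idl] by blast
  have dc: "\<forall>s\<in>pred_set T lt t. \<forall>s'\<in>pred_set T lt t. lt s s' \<longrightarrow> quot_le I (pf s') (pf s)"
    using IH unfolding pred_set_def by blast
  obtain q where q: "q \<in> D" "\<forall>s\<in>pred_set T lt t. quot_le I q (pf s)"
    using closure_chain[OF kcl cr pred_WO[OF 1(2)] lo inD rf dc] by blast
  have qc: "q \<in> quot_conds (Pkl r L) I" using q(1) DQ by blast
  obtain d where d: "d \<in> D" "quot_le I d q" "\<exists>B u b i. Qp t d B u b i" using decide[OF 1(2) qc] by blast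
  have "\<forall>s\<in>pred_set T lt t. quot_le I d (pf s)" using le_trans[OF idl qc d(2)] q(2) by blast
  then have "\<exists>d. d \<in> D \<and> (\<forall>s\<in>pred_set T lt t. quot_le I d (pf s)) \<and> (\<exists>B u b i. Qp t d B u b i)" using d by blast
  then have "step pf t \<in> D \<and> (\<forall>s\<in>pred_set T lt t. quot_le I (step pf t) (pf s)) \<and> (\<exists>B u b i. Qp t (step pf t) B u b i)"
    unfolding step_def by (rule someI_ex)
  then show ?case using pf_eq[OF 1(2)] by simp
qed

definition qq where "qq t = (SOME z. Qp t (pf t) (fst z) (fst (snd z)) (fst (snd (snd z))) (snd (snd (snd z))))"
definition Bt where "Bt t = fst (qq t)"
definition ut where "ut t = fst (snd (qq t))"
definition bt where "bt t = fst (snd (snd (qq t)))"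
definition it where "it t = snd (snd (snd (qq t)))"

lemma qq: assumes "t \<in> T" shows "Qp t (pf t) (Bt t) (ut t) (bt t) (it t)"
proof -
  obtain B u b i where "Qp t (pf t) B u b i" using pf_good[OF assms] by blast
  then have "\<exists>z. Qp t (pf t) (fst z) (fst (snd z)) (fst (snd (snd z))) (snd (snd (snd z)))"
    by (intro exI[of _ "(B, u, b, i)"]) simp
  then have "Qp t (pf t) (fst (qq t)) (fst (snd (qq t))) (fst (snd (snd (qq t)))) (snd (snd (snd (qq t))))"
    unfolding qq_def by (rule someI_ex)
  then show ?thesis unfolding Bt_def ut_def bt_def it_def .
qed

lemma Bt_prop: assumes "t \<in> T" "x \<in> Bt t"
  shows "x \<in> C0 \<and> t \<in> Sx x \<and> mp t \<in> Sx x \<and> Fx x t = ut t \<and> bf x t = bt t \<and> idx x t = it t"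
  using qq[OF assms(1)] assms mp[OF assms(1)] unfolding Qp_def Sx_def by blast

lemma pf_qc: "t \<in> T \<Longrightarrow> pf t \<in> quot_conds (Pkl r L) I" using pf_good DQ by blast

lemma Bt_ne: assumes "t \<in> T" shows "\<exists>x. x \<in> Bt t"
proof -
  have "forces I (pf t) (Bt t)" using qq[OF assms] unfolding Qp_def by blast
  then show ?thesis using forces_meet[OF idl pf_qc[OF assms]] by blast
qed

lemma meet: assumes "s \<in> T" "t \<in> T" "lt s t" shows "\<exists>x. x \<in> Bt s \<and> x \<in> Bt t"
proof -
  have ft: "forces I (pf t) (Bt t)" using qq[OF assms(2)] unfolding Qp_def by blast
  have fs: "forces I (pf s) (Bt s)" using qq[OF assms(1)] unfolding Qp_def by blast
  have "quot_le I (pf t) (pf s)" using pf_good[OF assms(2)] assms unfolding pred_set_def by blast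
  then have "forces I (pf t) (Bt s)" using forces_le[OF idl pf_qc[OF assms(1)] _ fs] by blast
  then show ?thesis using forces_meet[OF idl pf_qc[OF assms(2)]] ft by blast
qed

lemma nonmin: assumes "t \<in> T" "\<exists>s\<in>T. lt s t" shows "ut t \<in> T \<and> lt (ut t) t"
proof -
  obtain x where x: "x \<in> Bt t" using Bt_ne[OF assms(1)] by blast
  note P = Bt_prop[OF assms(1) x]
  have "lt (mp t) t" using mp[OF assms(1)] assms(2) by blast
  then have "\<exists>s\<in>Sx x. lt s t" using P by blast
  then have "lt (Fx x t) t" "Fx x t \<in> Sx x" using Fx[of x] P by blast+
  then show ?thesis using P unfolding Sx_def by auto
qed

lemma singl_less: "|{b}| <o r"
  by (rule finite_ordLess_infinite[OF card_of_Well_order WR]) (use ci in \<open>auto simp: cinfinite_def Field_card_of\<close>)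

definition ff where "ff t = (if \<exists>s\<in>T. lt s t then ut t else t)"
definition Cl where "Cl u i = {s \<in> T. (\<exists>s'\<in>T. lt s' s) \<and> ut s = u \<and> it s = i}"

lemma under_card: assumes "b \<in> Field r" shows "|under r b| <o r"
proof -
  have "|{b}| <o r" by (rule singl_less)
  then have "|underS r b \<union> {b}| <o r" using Un_Cinfinite_bound_strict[OF card_of_underS[OF cr assms] _ CI] by blast
  moreover have "under r b \<subseteq> underS r b \<union> {b}" unfolding under_def underS_def by blast
  ultimately show ?thesis using card_of_mono1 ordLeq_ordLess_trans by blast
qed

lemma T_special: "special_tree T lt r"
  unfolding special_tree_def
proof (intro exI[of _ ff] conjI ballI impI)
  fix t assume t: "t \<in> T"
  show "ff t \<in> T" using nonmin[OF t] t unfolding ff_def by auto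
next
  fix t assume t: "t \<in> T" and "\<exists>s\<in>T. lt s t"
  then show "lt (ff t) t" using nonmin[OF t] unfolding ff_def by auto
next
  fix u assume u: "u \<in> T"
  obtain x0 where x0: "x0 \<in> Bt u" using Bt_ne[OF u] by blast
  have btF: "bt u \<in> Field r" using Bt_prop[OF u x0] bf by metis
  let ?\<A> = "insert {s \<in> {u}. ff s = u} (Cl u ` under r (bt u))"
  have c1: "|Cl u ` under r (bt u)| <o r" using card_of_image under_card[OF btF] ordLeq_ordLess_trans by blast
  have "|{{s \<in> {u}. ff s = u}}| <o r" by (rule singl_less)
  then have "|{{s \<in> {u}. ff s = u}} \<union> Cl u ` under r (bt u)| <o r" using Un_Cinfinite_bound_strict[OF _ c1 CI] by blast
  then have card: "|?\<A>| <o r" by simp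
  have anti: "\<forall>A\<in>?\<A>. is_antichain T lt A"
  proof
    fix A assume "A \<in> ?\<A>"
    then consider "A = {s \<in> {u}. ff s = u}" | i where "A = Cl u i" by blast
    then show "is_antichain T lt A"
    proof cases
      case 1 then show ?thesis using u tr unfolding is_antichain_def is_tree_def by auto
    next
      case (2 i)
      show ?thesis unfolding is_antichain_def 2
      proof (intro conjI ballI)
        show "Cl u i \<subseteq> T" unfolding Cl_def by blast
        fix s s' assume s: "s \<in> Cl u i" and s': "s' \<in> Cl u i"
        show "\<not> lt s s'"
        proof
          assume l: "lt s s'"
          have sT: "s \<in> T" "s' \<in> T" using s s' unfolding Cl_def by blast+
          obtain x where x: "x \<in> Bt s" "x \<in> Bt s'" using meet[OF sT l] by blast
          note P1 = Bt_prop[OF sT(1) x(1)] and P2 = Bt_prop[OF sT(2) x(2)]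
          have "Fx x s = Fx x s'" "idx x s = idx x s'" using P1 P2 s s' unfolding Cl_def by auto
          then have "\<not> lt s s'" using idx_anti P1 P2 by blast
          then show False using l by blast
        qed
      qed
    qed
  qed
  have un: "\<Union>?\<A> = {s \<in> T. ff s = u}"
  proof
    show "\<Union>?\<A> \<subseteq> {s \<in> T. ff s = u}" using u unfolding Cl_def ff_def by auto
  next
    show "{s \<in> T. ff s = u} \<subseteq> \<Union>?\<A>"
    proof
      fix s assume s: "s \<in> {s \<in> T. ff s = u}"
      then have sT: "s \<in> T" by blast
      show "s \<in> \<Union>?\<A>"
      proof (cases "\<exists>s'\<in>T. lt s' s")
        case False
        then show ?thesis using s unfolding ff_def by auto
      next
        case True
        then have us: "ut s = u" using s unfolding ff_def by auto
        then have "lt u s" using nonmin[OF sT True] by blast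
        then obtain x where x: "x \<in> Bt u" "x \<in> Bt s" using meet[OF u sT] by blast
        note P1 = Bt_prop[OF u x(1)] and P2 = Bt_prop[OF sT x(2)]
        have "idx x s \<in> under r (bf x (Fx x s))" using idx P2 by blast
        then have "it s \<in> under r (bt u)" using P1 P2 us by simp
        moreover have "s \<in> Cl u (it s)" unfolding Cl_def using sT True us by blast
        ultimately show ?thesis by blast
      qed
    qed
  qed
  show "\<exists>\<A>. |\<A>| <o r \<and> (\<forall>A\<in>\<A>. is_antichain T lt A) \<and> \<Union>\<A> = {s \<in> T. ff s = u}"
    using card anti un by blast
qed

end

theorem mainTheorem2:
  fixes r :: "'k rel" and L :: "'l set" and I :: "'l set set set"
  assumes "Card_order r" and "Cinfinite r" and "regularCard r"
    and "r <o |L|"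
    and "is_ideal (Pkl r L) I" and "kappa_plus_complete r I" and "normal_ideal L (Pkl r L) I"
    and "\<exists>D. dense_in (quot_conds (Pkl r L) I) (quot_le I) D \<and> kappa_closed r D (quot_le I)"
  shows "RC r L TYPE('b)"
  unfolding RC_def
proof (intro allI impI)
  fix T :: "'b set" and lt
  assume a: "is_tree T lt \<and> tree_height_is T lt r \<and> |T| \<le>o |L| \<and> \<not> special_tree T lt r"
  show "\<exists>S\<subseteq>T. tree_height_is S lt r \<and> |S| <o cardSuc r \<and> \<not> special_tree S lt r"
  proof (rule ccontr)
    assume n: "\<not> ?thesis"
    then have HH: "\<forall>S \<subseteq> T. tree_height_is S lt r \<and> |S| <o cardSuc r \<longrightarrow> special_tree S lt r" by blast
    obtain g where g: "inj_on g T" "g ` T \<subseteq> L" using a card_of_ordLeq[of T L] by blast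
    have "|Field r| <o |L|" using card_of_Field_ordIso[OF assms(1)] assms(4) ordIso_ordLess_trans by blast
    then obtain e where e: "inj_on e (Field r)" "e ` Field r \<subseteq> L"
      using card_of_ordLeq[of "Field r" L] ordLess_imp_ordLeq by blast
    obtain D where D: "dense_in (quot_conds (Pkl r L) I) (quot_le I) D" "kappa_closed r D (quot_le I)"
      using assms(8) by blast
    have ci: "cinfinite r" using assms(2) by blast
    have "special_tree T lt r"
      using T_special[OF assms(1) ci assms(3) assms(5,6,7) D _ _ g e HH] a by blast
    then show False using a by blast
  qed
qed


end
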